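(* Let $d\ge2$, let $D\subset\mathbb{R}^d$ be open and connected, and let $S_1,\dots,S_N\subset\mathbb{R}^d$ ($N\ge1$) be closed bounded sets. Suppose that one of the following holds: (i) there is an upper semicontinuous function $g:\mathbb{R}^{d-1}\to\mathbb{R}$ with $D=\{(x_1,\dots,x_d):x_1>g(x_2,\dots,x_d)\}$, and all $S_k$ are convex; or (ii) $D=\{(x_1,\dots,x_d):x_1>0,\ x_2^2+\dots+x_d^2<1\}$, each $S_k$ is a (closed) ball, and the diameter $\rho_k$ of $S_k$ satisfies $\rho_k<1$ for $k=1,\dots,N$. Then the configuration space ${\bf D}$ is pathwise connected.
   Context: For $y\in\mathbb{R}^d$ write $S_k(y)=S_k+y$. The configuration space ${\bf D}\subset\mathbb{R}^{Nd}$ is the set of all ${\bf x}=(x^1,\dots,x^N)$, $x^k\in\mathbb{R}^d$, such that $S_k(x^k)\subset D$ for all $k=1,\dots,N$ and $S_j(x^j)\cap S_k(x^k)=\emptyset$ for all $j\neq k$. *)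

theory Defs
  imports "HOL-Analysis.Analysis"
begin

text \<open>Points of R^d are modelled as pairs (x1, x') in real \<times> 'b, where 'b is a
Euclidean space of dimension d-1 \<ge> 1 (so d \<ge> 2).  The N bodies are indexed by
a finite type 'n; a configuration is a vector in (real \<times> 'b)^'n = R^(Nd).\<close>

definition upper_semicontinuous :: "('a::topological_space \<Rightarrow> real) \<Rightarrow> bool" where
  "upper_semicontinuous g \<longleftrightarrow> (\<forall>c. open {y. g y < c})"

definition translate :: "'a::real_vector set \<Rightarrow> 'a \<Rightarrow> 'a set" where
  "translate S y = (\<lambda>s. s + y) ` S"

definition config_space ::
  "'a::real_vector set \<Rightarrow> ('n::finite \<Rightarrow> 'a set) \<Rightarrow> ('a ^ 'n) set" where
  "config_space D S = {x. (\<forall>k. translate (S k) (x $ k) \<subseteq> D) \<and>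
      (\<forall>j k. j \<noteq> k \<longrightarrow> translate (S j) (x $ j) \<inter> translate (S k) (x $ k) = {})}"

end

theory Submission
  imports Defs
begin

lemma seg_pc:
  fixes a b :: "'a::real_normed_vector"
  assumes "\<And>t. 0 \<le> t \<Longrightarrow> t \<le> 1 \<Longrightarrow> (1-t) *\<^sub>R a + t *\<^sub>R b \<in> S"
  shows "path_component S a b"
  unfolding path_component_def
  apply (rule exI[of _ "linepath a b"])
  using assms by (auto simp: path_image_linepath closed_segment_def pathstart_linepath pathfinish_linepath)

lemma fst_dist_le: "\<bar>fst a - fst b\<bar> \<le> dist a (b::real \<times> 'b::real_normed_vector)"
  using dist_fst_le[of a b] by (simp add: dist_real_def)

lemma snd_dist_le: "norm (snd a - snd b) \<le> dist a (b::real \<times> 'b::real_normed_vector)"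
  using dist_snd_le[of a b] by (simp add: dist_norm)

lemma vert_mono:
  fixes d :: "real \<times> 'b::real_normed_vector"
  assumes "fst d * s \<ge> 0"
  shows "norm d \<le> norm (d + (s, 0))"
proof -
  obtain a b where d: "d = (a,b)" by (cases d)
  have "a^2 \<le> (a+s)^2" using assms d by (simp add: power2_eq_square algebra_simps)
  then show ?thesis using d by (simp add: norm_Pair)
qed

lemma idx_exists:
  "\<exists>idx::'n::finite \<Rightarrow> nat. inj idx \<and> (\<forall>k. idx k < CARD('n))"
proof -
  obtain h where h: "bij_betw h (UNIV::'n set) {0..<card (UNIV::'n set)}"
    using ex_bij_betw_finite_nat[of "UNIV::'n set"] by auto
  then show ?thesis unfolding bij_betw_def by (intro exI[of _ h]) auto
qed

lemma rank_exists:
  fixes f :: "'n::finite \<Rightarrow> real"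
  shows "\<exists>lam. (\<forall>k. lam k \<ge> 1) \<and> (\<forall>j k. j \<noteq> k \<longrightarrow> (f k - f j) * (lam k - lam j) \<ge> 0 \<and> 1 \<le> \<bar>lam k - lam j\<bar>)"
proof -
  obtain idx :: "'n \<Rightarrow> nat" where inj: "inj idx" and lt: "\<And>k. idx k < CARD('n)"
    using idx_exists by blast
  define N where "N = CARD('n)"
  define c where "c k = card {j. f j < f k}" for k
  define lam where "lam k = real (N * c k + idx k) + 1" for k
  have cm: "c j < c k" if "f j < f k" for j k
  proof -
    have "{i. f i < f j} \<subset> {i. f i < f k}" using that by auto
    then show ?thesis unfolding c_def by (simp add: psubset_card_mono)
  qed
  have key: "lam j + 1 \<le> lam k" if "f j < f k" for j k
  proof -
    have "N * c j + N \<le> N * c k" using cm[OF that]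
      by (metis add.commute mult_Suc_right mult_le_mono2 Suc_leI)
    moreover have "idx j < N" "idx k < N" using lt N_def by auto
    ultimately have "N * c j + idx j + 1 \<le> N * c k + idx k" by linarith
    then show ?thesis unfolding lam_def by linarith
  qed
  have "(f k - f j) * (lam k - lam j) \<ge> 0 \<and> 1 \<le> \<bar>lam k - lam j\<bar>" if "j \<noteq> k" for j k
  proof (cases "f j < f k")
    case True with key[OF True] show ?thesis by auto
  next
    case False
    show ?thesis
    proof (cases "f k < f j")
      case True with key[OF True] show ?thesis by (auto intro: mult_nonpos_nonpos)
    next
      case False
      with \<open>\<not> f j < f k\<close> have "f j = f k" by auto
      then have "c j = c k" unfolding c_def by simp
      moreover have "idx j \<noteq> idx k" using inj that by (auto dest: injD)
      ultimately show ?thesis unfolding lam_def using \<open>f j = f k\<close> by auto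
    qed
  qed
  moreover have "\<forall>k. lam k \<ge> 1" unfolding lam_def by auto
  ultimately show ?thesis by blast
qed

lemma usc_bounded:
  assumes "upper_semicontinuous g" "compact K"
  shows "\<exists>M. \<forall>y\<in>K. g y \<le> M"
proof -
  have "K \<subseteq> (\<Union>n\<in>(UNIV::nat set). {y. g y < real n})"
    by (auto intro: reals_Archimedean2)
  then obtain C where "finite C" "K \<subseteq> (\<Union>n\<in>C. {y. g y < real n})"
    using compactE_image[OF assms(2), of UNIV "\<lambda>n. {y. g y < real n}"] assms(1)
    unfolding upper_semicontinuous_def by auto
  then show ?thesis
    by (intro exI[of _ "real (Max (insert 0 C))"]) (force intro: less_imp_le order.strict_trans2)
qed

definition vld :: "real \<Rightarrow> real \<Rightarrow> real \<Rightarrow> ('n::finite \<Rightarrow> bool) \<Rightarrow> (real \<times> 'b::real_normed_vector)^'n \<Rightarrow> bool" where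
  "vld h0 L R P A \<longleftrightarrow> (\<forall>k. P k \<longrightarrow> h0 \<le> fst (A$k) \<and> norm (snd (A$k)) \<le> L) \<and>
     (\<forall>j k. j \<noteq> k \<longrightarrow> P j \<longrightarrow> P k \<longrightarrow> 2*R < dist (A$j) (A$k))"

lemma vld_intro:
  assumes "\<And>k. P k \<Longrightarrow> h0 \<le> fst (A$k) \<and> norm (snd (A$k)) \<le> L"
    and "\<And>j k. j \<noteq> k \<Longrightarrow> P j \<Longrightarrow> P k \<Longrightarrow> 2*R < \<bar>fst (A$j) - fst (A$k)\<bar> \<or> 2*R < norm (snd (A$j) - snd (A$k))"
  shows "vld h0 L R P A"
  unfolding vld_def using assms fst_dist_le snd_dist_le by (meson less_le_trans)

lemma seg_pc_vec:
  fixes a b :: "('a::real_normed_vector)^'n::finite"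
  assumes "\<And>t. 0 \<le> t \<Longrightarrow> t \<le> 1 \<Longrightarrow> (\<chi> k. (1-t) *\<^sub>R (a$k) + t *\<^sub>R (b$k)) \<in> S"
  shows "path_component S a b"
proof (rule seg_pc)
  fix t :: real assume "0 \<le> t" "t \<le> 1"
  moreover have "(1-t) *\<^sub>R a + t *\<^sub>R b = (\<chi> k. (1-t) *\<^sub>R (a$k) + t *\<^sub>R (b$k))"
    by (simp add: vec_eq_iff)
  ultimately show "(1-t) *\<^sub>R a + t *\<^sub>R b \<in> S" using assms by simp
qed

lemma idx_bij:
  "\<exists>idx::'n::finite \<Rightarrow> nat. bij_betw idx UNIV {0..<CARD('n)}"
  using ex_bij_betw_finite_nat[of "UNIV::'n set"] by auto

lemma norm_conv_le:
  fixes u v :: "'a::real_normed_vector"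
  assumes "norm u \<le> L" "norm v \<le> L" "0 \<le> t" "t \<le> 1"
  shows "norm ((1-t) *\<^sub>R u + t *\<^sub>R v) \<le> L"
proof -
  have "norm ((1-t) *\<^sub>R u + t *\<^sub>R v) \<le> (1-t) * norm u + t * norm v"
    using assms by (metis abs_of_nonneg diff_ge_0_iff_ge norm_scaleR norm_triangle_le add_mono order_refl)
  also have "\<dots> \<le> (1-t) * L + t * L" using assms by (intro add_mono mult_left_mono) auto
  finally show ?thesis by (simp add: algebra_simps)
qed

lemma rank_step:
  fixes A :: "(real \<times> 'b::real_normed_vector)^'n::finite"
  assumes "vld h0 L R P A" "0 \<le> T"
    and lam: "\<forall>k. lam k \<ge> 1" "\<forall>j k. j \<noteq> k \<longrightarrow> (fst (A$k) - fst (A$j)) * (lam k - lam j) \<ge> 0"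
  shows "path_component {A. vld h0 L R P A} A (\<chi> k. A$k + (T * lam k, 0))"
proof (rule seg_pc_vec)
  fix t :: real assume t: "0 \<le> t" "t \<le> 1"
  have eq: "(1-t) *\<^sub>R (A$k) + t *\<^sub>R ((\<chi> k. A$k + (T * lam k, 0))$k) = A$k + (t*T*lam k, 0)" for k
    by (simp add: prod_eq_iff algebra_simps)
  have "vld h0 L R P (\<chi> k. A$k + (t*T*lam k, 0))"
    unfolding vld_def
  proof (intro conjI allI impI)
    fix k assume "P k"
    then have "h0 \<le> fst (A$k)" "norm (snd (A$k)) \<le> L" using assms(1) unfolding vld_def by auto
    moreover have "0 \<le> t*T*lam k" using t assms lam by (metis mult_nonneg_nonneg order_trans zero_le_one)
    ultimately show "h0 \<le> fst ((\<chi> k. A$k + (t*T*lam k, 0))$k)" "norm (snd ((\<chi> k. A$k + (t*T*lam k, 0))$k)) \<le> L"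
      by auto
  next
    fix j k assume jk: "j \<noteq> k" "P j" "P k"
    then have d: "2*R < dist (A$j) (A$k)" using assms(1) unfolding vld_def by auto
    have "fst (A$j - A$k) * (t*T*lam j - t*T*lam k) \<ge> 0"
    proof -
      have "(fst (A$j) - fst (A$k)) * (lam j - lam k) \<ge> 0" using lam(2) jk(1) by metis
      moreover have e2: "(fst (A$j - A$k)) * (t*T*lam j - t*T*lam k) = (t*T) * ((fst (A$j) - fst (A$k)) * (lam j - lam k))"
        by (simp add: algebra_simps)
      ultimately show ?thesis using t assms(2) by (simp only: e2) (rule mult_nonneg_nonneg; simp)
    qed
    then have "norm (A$j - A$k) \<le> norm ((A$j - A$k) + (t*T*lam j - t*T*lam k, 0))"
      by (rule vert_mono)
    moreover have "(A$j - A$k) + (t*T*lam j - t*T*lam k, 0) = (A$j + (t*T*lam j, 0)) - (A$k + (t*T*lam k, 0))"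
      by (simp add: prod_eq_iff)
    ultimately show "2*R < dist ((\<chi> k. A$k + (t*T*lam k, 0))$j) ((\<chi> k. A$k + (t*T*lam k, 0))$k)"
      using d by (simp add: dist_norm)
  qed
  then show "(\<chi> k. (1-t) *\<^sub>R (A$k) + t *\<^sub>R ((\<chi> k. A$k + (T * lam k, 0))$k)) \<in> {A. vld h0 L R P A}"
    by (simp only: eq) simp
qed

lemma sign_sep:
  fixes a b T :: real
  assumes "a * b \<ge> 0" "1 \<le> \<bar>b\<bar>" "0 \<le> T"
  shows "T \<le> \<bar>a + T * b\<bar>"
proof (cases "b \<ge> 0")
  case True
  then have b1: "1 \<le> b" using assms by auto
  then have "a \<ge> 0" using assms(1) by (simp add: zero_le_mult_iff)
  moreover have "T \<le> T * b" using mult_left_mono[OF b1 assms(3)] by simp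
  ultimately show ?thesis by linarith
next
  case False
  then have b1: "b \<le> -1" using assms by auto
  then have "a \<le> 0" using assms(1) by (simp add: zero_le_mult_iff)
  moreover have "T * b \<le> - T" using mult_left_mono[OF b1 assms(3)] by simp
  ultimately show ?thesis by linarith
qed

locale seqctx =
  fixes h :: "'n::finite \<Rightarrow> real" and idx :: "'n \<Rightarrow> nat" and h0 L R :: real
    and P :: "'n \<Rightarrow> bool" and e :: "'b::real_normed_vector"
  assumes idx: "bij_betw idx UNIV {0..<CARD('n)}"
    and R: "0 \<le> R" "R < L" and e: "norm e = 1"
    and act: "\<And>k. P k \<Longrightarrow> h0 \<le> h k"
    and hsep: "\<And>j k. j \<noteq> k \<Longrightarrow> 2*R+1 \<le> \<bar>h j - h k\<bar>"
begin

definition "T = 2*R+1"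
definition "H0 = max h0 (Max (range h)) + T"
definition "tg k = H0 + T * real (idx k)"
definition "F m y v = (\<chi> k. if idx k = m then (y, v) else if m < idx k then (tg k, -L *\<^sub>R e) else (h k, L *\<^sub>R e))"
definition "C m = (\<chi> k. if m \<le> idx k then (tg k, -L *\<^sub>R e) else (h k, L *\<^sub>R e))"

lemma T_pos: "2*R < T" "0 < T" using R unfolding T_def by auto

lemma h_le: "h k + T \<le> H0"
proof -
  have "h k \<le> Max (range h)" by (rule Max_ge) auto
  then show ?thesis unfolding H0_def using max.cobounded2[of "Max (range h)" h0] by linarith
qed

lemma h0_le: "h0 \<le> H0" unfolding H0_def using T_pos by auto

lemma tg_ge: "H0 \<le> tg k" unfolding tg_def using T_pos by auto

lemma idx_inj: "idx j = idx k \<Longrightarrow> j = k"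
  using idx unfolding bij_betw_def by (auto dest: injD)

lemma tg_sep: "idx j < idx k \<Longrightarrow> tg j + T \<le> tg k"
proof -
  assume "idx j < idx k"
  then have "real (idx j) + 1 \<le> real (idx k)" by linarith
  then have "T * (real (idx j) + 1) \<le> T * real (idx k)" using T_pos by (intro mult_left_mono) auto
  then show ?thesis unfolding tg_def by (simp add: algebra_simps)
qed

lemma eL: "norm (L *\<^sub>R e) = L" "norm (-(L *\<^sub>R e)) = L" "norm (L *\<^sub>R e + L *\<^sub>R e) = 2*L" "norm (-(L *\<^sub>R e) - L *\<^sub>R e) = 2*L"
proof -
  have L0: "0 \<le> L" using R by auto
  show "norm (L *\<^sub>R e) = L" "norm (-(L *\<^sub>R e)) = L" using e L0 by auto
  have "L *\<^sub>R e + L *\<^sub>R e = (2*L) *\<^sub>R e" by (metis scaleR_2 scaleR_scaleR)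
  then show "norm (L *\<^sub>R e + L *\<^sub>R e) = 2*L" using e L0 by simp
  have "-(L *\<^sub>R e) - L *\<^sub>R e = -((2*L) *\<^sub>R e)" by (metis scaleR_2 scaleR_scaleR minus_add_distrib diff_conv_add_uminus)
  then show "norm (-(L *\<^sub>R e) - L *\<^sub>R e) = 2*L" using e L0 by simp
qed

lemma F_valid:
  assumes "idx k0 = m" 
    and "(y = h k0 \<and> norm v \<le> L) \<or> (v = -L *\<^sub>R e \<and> h k0 \<le> y \<and> y \<le> tg k0)"
  shows "vld h0 L R P (F m y v)"
proof (rule vld_intro)
  fix k assume "P k"
  show "h0 \<le> fst (F m y v $ k) \<and> norm (snd (F m y v $ k)) \<le> L"
  proof (cases "idx k = m")
    case True
    then have "k = k0" using assms(1) idx_inj by auto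
    then show ?thesis using True act[of k] \<open>P k\<close> assms(2) eL unfolding F_def by auto
  next
    case False
    then show ?thesis using act[of k] \<open>P k\<close> h0_le tg_ge[of k] eL unfolding F_def by auto
  qed
next
  fix j k assume jk: "j \<noteq> k" "P j" "P k"
  have LR: "2*R < 2*L" using R by auto
  have hs: "2*R < \<bar>h j - h k\<bar>" if "j \<noteq> k" for j k using hsep[OF that] by auto
  have idxne: "idx j \<noteq> idx k" using jk idx_inj by blast
  have gen: "2*R < \<bar>fst (F m y v $ j) - fst (F m y v $ k)\<bar> \<or> 2*R < norm (snd (F m y v $ j) - snd (F m y v $ k))"
    if "j \<noteq> k" "idx j \<noteq> idx k" "idx j \<noteq> m \<or> (idx k \<noteq> m \<and> idx j < idx k)" for j k
  proof -
    consider "idx j = m" | "idx j \<noteq> m" "idx k = m" | "idx j \<noteq> m" "idx k \<noteq> m" by blast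
    then show ?thesis
    proof cases
      case 1
      then have jk0: "j = k0" using assms(1) idx_inj by blast
      have "m < idx k" using that 1 by auto
      then have "tg k0 + T \<le> tg k" using tg_sep assms(1) by auto
      moreover have "h k0 + T \<le> tg k" using h_le[of k0] tg_ge[of k] by auto
      ultimately show ?thesis using 1 \<open>m < idx k\<close> assms(2) T_pos unfolding F_def jk0
        by (auto simp: eL)
    next
      case 2
      then have jk0: "k = k0" using assms(1) idx_inj by blast
      show ?thesis
      proof (cases "m < idx j")
        case True
        then have "tg k0 + T \<le> tg j" using tg_sep assms(1) by auto
        moreover have "h k0 + T \<le> tg j" using h_le[of k0] tg_ge[of j] by auto
        ultimately show ?thesis using 2 True assms(2) T_pos unfolding F_def jk0
          by (auto simp: eL)
      next
        case False
        then show ?thesis using 2 assms(2) hs[of j k0] jk0 that LR unfolding F_def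
          by (auto simp: eL norm_minus_commute)
      qed
    next
      case 3
      have a: "tg j + T \<le> tg k \<or> tg k + T \<le> tg j" using tg_sep that by (meson linorder_neq_iff)
      show ?thesis
        using 3 a hs[OF that(1)] T_pos LR unfolding F_def by (auto simp: eL)
    qed
  qed
  show "2*R < \<bar>fst (F m y v $ j) - fst (F m y v $ k)\<bar> \<or> 2*R < norm (snd (F m y v $ j) - snd (F m y v $ k))"
  proof (cases "idx j \<noteq> m \<or> (idx k \<noteq> m \<and> idx j < idx k)")
    case True then show ?thesis using gen jk idxne by blast
  next
    case False
    then have "idx k \<noteq> m \<or> (idx j \<noteq> m \<and> idx k < idx j)" using idxne by auto
    then have "2*R < \<bar>fst (F m y v $ k) - fst (F m y v $ j)\<bar> \<or> 2*R < norm (snd (F m y v $ k) - snd (F m y v $ j))"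
      using gen[of k j] jk idxne by auto
    then show ?thesis by (simp add: abs_minus_commute norm_minus_commute)
  qed
qed


lemma F_lin: "(\<chi> k. (1-t) *\<^sub>R (F m y1 v1 $ k) + t *\<^sub>R (F m y2 v2 $ k)) = F m ((1-t)*y1 + t*y2) ((1-t) *\<^sub>R v1 + t *\<^sub>R v2)"
  unfolding F_def by (simp add: vec_eq_iff prod_eq_iff algebra_simps)

lemma C_F: "idx k0 = m \<Longrightarrow> C (Suc m) = F m (h k0) (L *\<^sub>R e)"
  "idx k0 = m \<Longrightarrow> C m = F m (tg k0) (-(L *\<^sub>R e))"
  unfolding C_def F_def by (auto simp: vec_eq_iff dest: idx_inj)

lemma C_step:
  assumes "m < CARD('n)"
  shows "path_component {A. vld h0 L R P A} (C (Suc m)) (C m)"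
proof -
  obtain k0 where k0: "idx k0 = m" using idx assms unfolding bij_betw_def by (metis atLeastLessThan_iff imageE zero_le)
  define E where "E = F m (h k0) (-(L *\<^sub>R e))"
  have "path_component {A. vld h0 L R P A} (C (Suc m)) E"
  proof (rule seg_pc_vec)
    fix t :: real assume t: "0 \<le> t" "t \<le> 1"
    have "norm ((1-t) *\<^sub>R (L *\<^sub>R e) + t *\<^sub>R (-(L *\<^sub>R e))) \<le> L"
      by (rule norm_conv_le) (use t eL in auto)
    moreover have "(1-t)*h k0 + t*h k0 = h k0" by (simp add: algebra_simps)
    ultimately show "(\<chi> k. (1-t) *\<^sub>R (C (Suc m) $ k) + t *\<^sub>R (E $ k)) \<in> {A. vld h0 L R P A}"
      unfolding C_F(1)[OF k0] E_def F_lin using F_valid[OF k0] by simp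
  qed
  moreover have "path_component {A. vld h0 L R P A} E (C m)"
  proof (rule seg_pc_vec)
    fix t :: real assume t: "0 \<le> t" "t \<le> 1"
    have "h k0 \<le> tg k0" using h_le[of k0] tg_ge[of k0] T_pos by auto
    moreover have "t * h k0 \<le> t * tg k0" "(1-t) * h k0 \<le> (1-t) * tg k0"
      using \<open>h k0 \<le> tg k0\<close> t by (auto intro: mult_left_mono)
    ultimately have "h k0 \<le> (1-t)*h k0 + t*tg k0 \<and> (1-t)*h k0 + t*tg k0 \<le> tg k0"
      by (simp add: algebra_simps)
    moreover have "(1-t) *\<^sub>R (-(L *\<^sub>R e)) + t *\<^sub>R (-(L *\<^sub>R e)) = -(L *\<^sub>R e)"
      by (simp add: algebra_simps)
    ultimately show "(\<chi> k. (1-t) *\<^sub>R (E $ k) + t *\<^sub>R (C m $ k)) \<in> {A. vld h0 L R P A}"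
      unfolding C_F(2)[OF k0] E_def F_lin using F_valid[OF k0] by simp
  qed
  ultimately show ?thesis by (rule path_component_trans)
qed

lemma C_chain: "m \<le> CARD('n) \<Longrightarrow> path_component {A. vld h0 L R P A} (C m) (C 0)"
proof (induction m)
  case 0
  obtain k0 where k0: "idx k0 = 0" using idx unfolding bij_betw_def
    by (metis atLeastLessThan_iff imageE zero_le zero_less_card_finite finite_UNIV UNIV_not_empty)
  have "h k0 \<le> tg k0" using h_le[of k0] tg_ge[of k0] T_pos by linarith
  then have "vld h0 L R P (C 0)" unfolding C_F(2)[OF k0] by (intro F_valid[OF k0]) simp
  then show ?case by (intro path_component_refl) simp
next
  case (Suc m)
  then show ?case using C_step[of m] path_component_trans by auto
qed

definition "Z = (\<chi> k. (h0 + T * real (idx k), -(L *\<^sub>R e)))"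

lemma C0_Z: "path_component {A. vld h0 L R P A} (C 0) Z"
proof (rule seg_pc_vec)
  fix t :: real assume t: "0 \<le> t" "t \<le> 1"
  have "vld h0 L R P (\<chi> k. ((1-t)*H0 + t*h0 + T * real (idx k), -(L *\<^sub>R e)))"
  proof (rule vld_intro)
    fix k
    have "(1-t)*h0 \<le> (1-t)*H0" using h0_le t by (intro mult_left_mono) auto
    then have "h0 \<le> (1-t)*H0 + t*h0" by (simp add: algebra_simps)
    moreover have "0 \<le> T * real (idx k)" using T_pos by auto
    ultimately show "h0 \<le> fst ((\<chi> k. ((1-t)*H0 + t*h0 + T * real (idx k), -(L *\<^sub>R e))) $ k) \<and>
        norm (snd ((\<chi> k. ((1-t)*H0 + t*h0 + T * real (idx k), -(L *\<^sub>R e))) $ k)) \<le> L"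
      using eL by simp
  next
    fix j k :: 'n assume "j \<noteq> k"
    then have "idx j \<noteq> idx k" using idx_inj by blast
    then have "tg j + T \<le> tg k \<or> tg k + T \<le> tg j" using tg_sep by (meson linorder_neq_iff)
    then have "T \<le> \<bar>T * real (idx j) - T * real (idx k)\<bar>" unfolding tg_def by auto
    then show "2*R < \<bar>fst ((\<chi> k. ((1-t)*H0 + t*h0 + T * real (idx k), -(L *\<^sub>R e))) $ j) - fst ((\<chi> k. ((1-t)*H0 + t*h0 + T * real (idx k), -(L *\<^sub>R e))) $ k)\<bar> \<or> 2*R < norm (snd ((\<chi> k. ((1-t)*H0 + t*h0 + T * real (idx k), -(L *\<^sub>R e))) $ j) - snd ((\<chi> k. ((1-t)*H0 + t*h0 + T * real (idx k), -(L *\<^sub>R e))) $ k))"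
      using T_pos by simp
  qed
  moreover have "(\<chi> k. (1-t) *\<^sub>R (C 0 $ k) + t *\<^sub>R (Z $ k)) = (\<chi> k. ((1-t)*H0 + t*h0 + T * real (idx k), -(L *\<^sub>R e)))"
    unfolding C_def Z_def tg_def by (simp add: vec_eq_iff prod_eq_iff algebra_simps)
  ultimately show "(\<chi> k. (1-t) *\<^sub>R (C 0 $ k) + t *\<^sub>R (Z $ k)) \<in> {A. vld h0 L R P A}" by simp
qed

lemma CN_Z: "path_component {A. vld h0 L R P A} (C (CARD('n))) Z"
  using C_chain[of "CARD('n)"] C0_Z path_component_trans by blast

end

lemma good_pc:
  fixes P :: "'n::finite \<Rightarrow> bool" and e :: "'b::real_normed_vector"
  assumes R: "0 \<le> R" "R < L" and e: "norm e = 1"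
  shows "path_connected {A :: (real \<times> 'b)^'n. vld h0 L R P A}"
proof -
  let ?V = "{A :: (real \<times> 'b)^'n. vld h0 L R P A}"
  obtain idx :: "'n \<Rightarrow> nat" where idx: "bij_betw idx UNIV {0..<CARD('n)}" using idx_bij by blast
  define Z0 where "Z0 = (\<chi> k. (h0 + (2*R+1) * real (idx k), -(L *\<^sub>R e)))"
  have main: "path_component ?V A Z0" if A: "vld h0 L R P A" for A
  proof -
    obtain lam where lam1: "\<forall>k. lam k \<ge> 1"
      and lam2: "\<forall>j k. j \<noteq> k \<longrightarrow> (fst (A$k) - fst (A$j)) * (lam k - lam j) \<ge> 0 \<and> 1 \<le> \<bar>lam k - lam j\<bar>"
      using rank_exists[of "\<lambda>k. fst (A$k)"] by blast
    define T where "T = 2*R+1"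
    have T0: "0 \<le> T" using R unfolding T_def by auto
    define A1 where "A1 = (\<chi> k. A$k + (T * lam k, 0))"
    have p1: "path_component ?V A A1" unfolding A1_def
      by (rule rank_step[OF A T0]) (use lam1 lam2 in auto)
    define h where "h k = fst (A$k) + T * lam k" for k
    have act: "h0 \<le> h k" if "P k" for k
    proof -
      have "h0 \<le> fst (A$k)" using A that unfolding vld_def by auto
      moreover have "0 \<le> T * lam k" using T0 lam1 by (metis mult_nonneg_nonneg order_trans zero_le_one)
      ultimately show ?thesis unfolding h_def by linarith
    qed
    have hsep: "2*R+1 \<le> \<bar>h j - h k\<bar>" if "j \<noteq> k" for j k
    proof -
      have "(fst (A$j) - fst (A$k)) * (lam j - lam k) \<ge> 0" "1 \<le> \<bar>lam j - lam k\<bar>"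
        using lam2 that by (metis (no_types))+
      from sign_sep[OF this T0] have "T \<le> \<bar>(fst (A$j) - fst (A$k)) + T * (lam j - lam k)\<bar>" .
      moreover have "h j - h k = (fst (A$j) - fst (A$k)) + T * (lam j - lam k)"
        unfolding h_def by (simp add: algebra_simps)
      ultimately show ?thesis unfolding T_def by simp
    qed
    interpret s: seqctx h idx h0 L R P e
      by unfold_locales (use idx R e act hsep in auto)
    have CN: "s.C (CARD('n)) = (\<chi> k. (h k, L *\<^sub>R e))"
    proof -
      have "idx k < CARD('n)" for k using idx unfolding bij_betw_def by auto
      then show ?thesis unfolding s.C_def by (auto simp: vec_eq_iff not_le dest: leD)
    qed
    have p2: "path_component ?V A1 (s.C (CARD('n)))"
      unfolding CN
    proof (rule seg_pc_vec)
      fix t :: real assume t: "0 \<le> t" "t \<le> 1"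
      have "vld h0 L R P (\<chi> k. (h k, (1-t) *\<^sub>R snd (A$k) + t *\<^sub>R (L *\<^sub>R e)))"
      proof (rule vld_intro)
        fix k assume "P k"
        then have "norm (snd (A$k)) \<le> L" using A unfolding vld_def by auto
        then have "norm ((1-t) *\<^sub>R snd (A$k) + t *\<^sub>R (L *\<^sub>R e)) \<le> L"
          by (intro norm_conv_le) (use t s.eL in auto)
        then show "h0 \<le> fst ((\<chi> k. (h k, (1-t) *\<^sub>R snd (A$k) + t *\<^sub>R (L *\<^sub>R e))) $ k) \<and>
            norm (snd ((\<chi> k. (h k, (1-t) *\<^sub>R snd (A$k) + t *\<^sub>R (L *\<^sub>R e))) $ k)) \<le> L"
          using act[OF \<open>P k\<close>] by simp
      next
        fix j k :: 'n assume "j \<noteq> k"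
        then show "2*R < \<bar>fst ((\<chi> k. (h k, (1-t) *\<^sub>R snd (A$k) + t *\<^sub>R (L *\<^sub>R e))) $ j) - fst ((\<chi> k. (h k, (1-t) *\<^sub>R snd (A$k) + t *\<^sub>R (L *\<^sub>R e))) $ k)\<bar> \<or> 2*R < norm (snd ((\<chi> k. (h k, (1-t) *\<^sub>R snd (A$k) + t *\<^sub>R (L *\<^sub>R e))) $ j) - snd ((\<chi> k. (h k, (1-t) *\<^sub>R snd (A$k) + t *\<^sub>R (L *\<^sub>R e))) $ k))"
          using hsep[of j k] by simp
      qed
      moreover have "(\<chi> k. (1-t) *\<^sub>R (A1 $ k) + t *\<^sub>R ((\<chi> k. (h k, L *\<^sub>R e)) $ k)) = (\<chi> k. (h k, (1-t) *\<^sub>R snd (A$k) + t *\<^sub>R (L *\<^sub>R e)))"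
        unfolding A1_def h_def by (simp add: vec_eq_iff prod_eq_iff algebra_simps)
      ultimately show "(\<chi> k. (1-t) *\<^sub>R (A1 $ k) + t *\<^sub>R ((\<chi> k. (h k, L *\<^sub>R e)) $ k)) \<in> ?V" by simp
    qed
    have "s.Z = Z0" unfolding s.Z_def Z0_def s.T_def ..
    then have p3: "path_component ?V (s.C (CARD('n))) Z0" using s.CN_Z by simp
    show ?thesis using p1 p2 p3 path_component_trans by blast
  qed
  show ?thesis unfolding path_connected_component
    using main path_component_trans path_component_sym by blast
qed

lemma translate_cball: "translate (cball c r) y = cball (c + y) (r::real)" for c y :: "'a::real_normed_vector"
  unfolding translate_def using image_add_cball[of y c r] by (simp add: add.commute)

lemma cball_inter_nonempty:
  fixes a b :: "'a::real_normed_vector"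
  assumes "0 \<le> r" "0 \<le> s" "dist a b \<le> r + s"
  shows "cball a r \<inter> cball b s \<noteq> {}"
proof (cases "r + s = 0")
  case True
  then have "a = b" "r = 0" "s = 0" using assms by auto
  then show ?thesis by auto
next
  case False
  then have rs: "r + s > 0" using assms by auto
  define p where "p = a + (r/(r+s)) *\<^sub>R (b - a)"
  have "dist a p = (r/(r+s)) * dist a b" unfolding p_def using rs assms
    by (simp add: dist_norm norm_minus_commute)
  also have "\<dots> \<le> (r/(r+s)) * (r+s)" using assms rs by (intro mult_left_mono) auto
  also have "\<dots> = r" using rs by simp
  finally have 1: "p \<in> cball a r" by simp
  have "b - p = (1 - r/(r+s)) *\<^sub>R (b - a)" unfolding p_def by (simp add: algebra_simps)
  also have "1 - r/(r+s) = s/(r+s)" using rs by (simp add: field_simps)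
  finally have "dist b p = (s/(r+s)) * dist a b" using rs assms
    by (simp add: dist_norm norm_minus_commute)
  also have "\<dots> \<le> (s/(r+s)) * (r+s)" using assms rs by (intro mult_left_mono) auto
  also have "\<dots> = s" using rs by simp
  finally have 2: "p \<in> cball b s" by simp
  from 1 2 show ?thesis by blast
qed

lemma cball_disjoint_iff:
  fixes a b :: "'a::real_normed_vector"
  assumes "0 \<le> r" "0 \<le> s"
  shows "cball a r \<inter> cball b s = {} \<longleftrightarrow> r + s < dist a b"
  using cball_inter_nonempty[OF assms] disjoint_cballI[of r s a b] by force

lemma cball_in_tube:
  fixes a :: "real \<times> 'b::euclidean_space"
  assumes "0 \<le> r"
  shows "cball a r \<subseteq> {x. fst x > 0 \<and> (norm (snd x))\<^sup>2 < 1} \<longleftrightarrow> r < fst a \<and> norm (snd a) + r < 1"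
proof
  assume H: "r < fst a \<and> norm (snd a) + r < 1"
  show "cball a r \<subseteq> {x. fst x > 0 \<and> (norm (snd x))\<^sup>2 < 1}"
  proof
    fix p assume "p \<in> cball a r"
    then have d: "dist a p \<le> r" by simp
    have "\<bar>fst a - fst p\<bar> \<le> r" using fst_dist_le[of a p] d by linarith
    moreover have "norm (snd a - snd p) \<le> r" using snd_dist_le[of a p] d by linarith
    then have "norm (snd p) \<le> norm (snd a) + r" by (metis norm_triangle_sub add_mono order_refl order_trans norm_minus_commute add.commute)
    then have "norm (snd p) < 1" using H by linarith
    then have "(norm (snd p))\<^sup>2 < 1" by (simp add: power_less_one_iff abs_less_iff)
    ultimately show "p \<in> {x. fst x > 0 \<and> (norm (snd x))\<^sup>2 < 1}" using H by auto
  qed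
next
  assume H: "cball a r \<subseteq> {x. fst x > 0 \<and> (norm (snd x))\<^sup>2 < 1}"
  have "a - (r, 0) \<in> cball a r" using assms by (simp add: dist_norm)
  then have "a - (r, 0) \<in> {x. fst x > 0 \<and> (norm (snd x))\<^sup>2 < 1}" using H by blast
  then have 1: "r < fst a" by simp
  obtain u :: 'b where u: "norm u = 1" "snd a + r *\<^sub>R u = (norm (snd a) + r) *\<^sub>R u"
  proof (cases "snd a = 0")
    case True
    obtain e :: 'b where "e \<in> Basis" using nonempty_Basis by blast
    then have "norm e = 1" by simp
    then show ?thesis using True that[of e] by simp
  next
    case False
    have "snd a + r *\<^sub>R sgn (snd a) = (norm (snd a) + r) *\<^sub>R sgn (snd a)"
      using False by (simp add: sgn_div_norm distrib_right scaleR_left_distrib)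
    then show ?thesis using that[of "sgn (snd a)"] False by (simp add: norm_sgn)
  qed
  have "a + (0, r *\<^sub>R u) \<in> cball a r" using assms u by (simp add: dist_norm)
  then have "(norm (snd a + r *\<^sub>R u))\<^sup>2 < 1" using H by auto
  then have "norm (snd a + r *\<^sub>R u) < 1" by (simp add: power_less_one_iff abs_less_iff)
  then have "norm (snd a) + r < 1" using u assms by simp
  with 1 show "r < fst a \<and> norm (snd a) + r < 1" by simp
qed

lemma shift_pc:
  fixes a b Cv :: "('a::real_normed_vector)^'n::finite"
  assumes "\<And>t. 0 \<le> t \<Longrightarrow> t \<le> 1 \<Longrightarrow> Q (\<chi> k. (1-t) *\<^sub>R (a$k) + t *\<^sub>R (b$k))"
  shows "path_component {x. Q (x + Cv)} (a - Cv) (b - Cv)"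
proof (rule seg_pc_vec)
  fix t :: real assume t: "0 \<le> t" "t \<le> 1"
  have "(\<chi> k. (1-t) *\<^sub>R ((a - Cv)$k) + t *\<^sub>R ((b - Cv)$k)) + Cv = (\<chi> k. (1-t) *\<^sub>R (a$k) + t *\<^sub>R (b$k))"
    by (simp add: vec_eq_iff algebra_simps)
  then show "(\<chi> k. (1-t) *\<^sub>R ((a - Cv)$k) + t *\<^sub>R ((b - Cv)$k)) \<in> {x. Q (x + Cv)}"
    using assms[OF t] by simp
qed

lemma good_pc_x:
  fixes P :: "'n::finite \<Rightarrow> bool" and Cv :: "(real \<times> 'b::euclidean_space)^'n"
  assumes R: "0 \<le> R" "R < L"
  shows "path_connected {x. vld h0 L R P (x + Cv)}"
proof -
  obtain e :: 'b where "e \<in> Basis" using nonempty_Basis by blast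
  then have e: "norm e = 1" by simp
  have "{x. vld h0 L R P (x + Cv)} = (\<lambda>A. A - Cv) ` {A. vld h0 L R P A}"
    by (auto simp: image_iff intro!: exI[of _ "x + Cv" for x])
  moreover have "path_connected ((\<lambda>A. A - Cv) ` {A :: (real \<times> 'b)^'n. vld h0 L R P A})"
    by (rule path_connected_continuous_image[OF _ good_pc[OF R e]]) (intro continuous_intros)
  ultimately show ?thesis by simp
qed

lemma pc_combine:
  assumes "G \<subseteq> X" "path_connected G"
    and "\<And>x. x \<in> X \<Longrightarrow> \<exists>x'\<in>G. path_component X x x'"
  shows "path_connected X"
  unfolding path_connected_component
proof (intro ballI)
  fix x y assume "x \<in> X" "y \<in> X"
  then obtain x' y' where "x' \<in> G" "y' \<in> G" "path_component X x x'" "path_component X y y'"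
    using assms(3) by blast
  moreover have "path_component X x' y'"
    using assms(1,2) \<open>x' \<in> G\<close> \<open>y' \<in> G\<close> path_component_of_subset path_connected_component by blast
  ultimately show "path_component X x y" using path_component_trans path_component_sym by blast
qed

lemma case2:
  fixes D :: "(real \<times> 'b::euclidean_space) set" and S :: "'n::finite \<Rightarrow> (real \<times> 'b) set"
  assumes D: "D = {x. fst x > 0 \<and> (norm (snd x))\<^sup>2 < 1}"
    and S: "\<forall>k. (\<exists>c r. S k = cball c r) \<and> diameter (S k) < 1"
  shows "path_connected (config_space D S)"
proof -
  obtain c r where Sk: "\<And>k. S k = cball (c k) (r k)"
    using S by metis
  have rhalf: "r k < 1/2" if "0 \<le> r k" for k
  proof -
    have "diameter (S k) < 1" using S by blast
    then have "diameter (cball (c k) (r k)) < 1" using Sk[of k] by simp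
    then show ?thesis using that diameter_cball[of "c k" "r k"] by simp
  qed
  define Cv where "Cv = (\<chi> k. c k)"
  define P where "P k = (0 \<le> r k)" for k
  define Vii where "Vii A \<longleftrightarrow> (\<forall>k. 0 \<le> r k \<longrightarrow> r k < fst (A$k) \<and> norm (snd (A$k)) + r k < 1) \<and>
      (\<forall>j k. j \<noteq> k \<longrightarrow> 0 \<le> r j \<longrightarrow> 0 \<le> r k \<longrightarrow> r j + r k < dist (A$j) (A$k))" for A :: "(real \<times> 'b)^'n"
  have tr: "translate (S k) (x$k) = cball ((x + Cv)$k) (r k)" for x k
    unfolding Sk translate_cball Cv_def by (simp add: add.commute)
  have cfg: "config_space D S = {x. Vii (x + Cv)}"
  proof -
    have 1: "cball a (r k) \<subseteq> D \<longleftrightarrow> (0 \<le> r k \<longrightarrow> r k < fst a \<and> norm (snd a) + r k < 1)" for a :: "real \<times> 'b" and k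
      using cball_in_tube[of "r k" a] D by (cases "r k < 0") auto
    have 2: "cball a (r j) \<inter> cball b (r k) = {} \<longleftrightarrow> (0 \<le> r j \<longrightarrow> 0 \<le> r k \<longrightarrow> r j + r k < dist a b)" for a b :: "real \<times> 'b" and j k
      using cball_disjoint_iff[of "r j" "r k" a b] by (cases "r j < 0 \<or> r k < 0") auto
    show ?thesis unfolding config_space_def tr 1 2 Vii_def by auto
  qed
  define R0 where "R0 = Max (range (\<lambda>k. max (r k) 0))"
  have R0: "0 \<le> R0" "R0 < 1/2" "\<And>k. r k \<le> R0"
  proof -
    obtain k0 :: 'n where True by blast
    have "max (r k) 0 \<le> R0" for k unfolding R0_def by (rule Max_ge) auto
    then show "0 \<le> R0" "\<And>k. r k \<le> R0" by (auto intro: order_trans[OF max.cobounded2] order_trans[OF max.cobounded1])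
    have "R0 \<in> range (\<lambda>k. max (r k) 0)" unfolding R0_def by (rule Max_in) auto
    then obtain k where "R0 = max (r k) 0" by auto
    then show "R0 < 1/2" using rhalf[of k] by (cases "0 \<le> r k") auto
  qed
  define G where "G = {x. vld (1/2) (1/2) R0 P (x + Cv)}"
  have Gsub: "G \<subseteq> config_space D S"
  proof
    fix x assume "x \<in> G"
    then have v: "vld (1/2) (1/2) R0 P (x + Cv)" unfolding G_def by simp
    have "Vii (x + Cv)" unfolding Vii_def
    proof (intro conjI allI impI)
      fix k assume "0 \<le> r k"
      then have "1/2 \<le> fst ((x + Cv)$k)" "norm (snd ((x + Cv)$k)) \<le> 1/2"
        using v unfolding vld_def P_def by auto
      then show "r k < fst ((x + Cv)$k)" "norm (snd ((x + Cv)$k)) + r k < 1"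
        using R0(2) R0(3)[of k] by linarith+
    next
      fix j k assume "j \<noteq> k" "0 \<le> r j" "0 \<le> r k"
      then have "2*R0 < dist ((x + Cv)$j) ((x + Cv)$k)" using v unfolding vld_def P_def by auto
      then show "r j + r k < dist ((x + Cv)$j) ((x + Cv)$k)" using R0(3)[of j] R0(3)[of k] by linarith
    qed
    then show "x \<in> config_space D S" unfolding cfg by simp
  qed
  have entry: "\<exists>x'\<in>G. path_component (config_space D S) x x'" if x: "x \<in> config_space D S" for x
  proof -
    define A where "A = x + Cv"
    have VA: "Vii A" using x unfolding cfg A_def by simp
    obtain lam where lam1: "\<forall>k. lam k \<ge> 1"
      and lam2: "\<forall>j k. j \<noteq> k \<longrightarrow> (fst (A$k) - fst (A$j)) * (lam k - lam j) \<ge> 0 \<and> 1 \<le> \<bar>lam k - lam j\<bar>"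
      using rank_exists[of "\<lambda>k. fst (A$k)"] by blast
    have lam2': "(fst (A$j) - fst (A$k)) * (lam j - lam k) \<ge> 0" "1 \<le> \<bar>lam j - lam k\<bar>" if "j \<noteq> k" for j k
      using lam2 that by (metis (no_types))+
    define A1 where "A1 = (\<chi> k. A$k + (2 * lam k, 0))"
    define A2 where "A2 = (\<chi> k. (fst (A$k) + 2 * lam k, 0::'b))"
    have fsep: "2 \<le> \<bar>(fst (A$j) + 2 * lam j) - (fst (A$k) + 2 * lam k)\<bar>" if "j \<noteq> k" for j k
    proof -
      have "2 \<le> \<bar>(fst (A$j) - fst (A$k)) + 2 * (lam j - lam k)\<bar>"
        by (rule sign_sep) (use lam2'[OF that] in auto)
      then show ?thesis by (simp add: algebra_simps)
    qed
    have p1: "path_component {x. Vii (x + Cv)} (A - Cv) (A1 - Cv)"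
    proof (rule shift_pc)
      fix t :: real assume t: "0 \<le> t" "t \<le> 1"
      have eq: "(\<chi> k. (1-t) *\<^sub>R (A$k) + t *\<^sub>R (A1$k)) = (\<chi> k. A$k + (t * 2 * lam k, 0))"
        unfolding A1_def by (simp add: vec_eq_iff prod_eq_iff algebra_simps)
      have nn: "0 \<le> t * 2 * lam k" for k using t lam1 by (metis mult_nonneg_nonneg order_trans zero_le_one zero_le_numeral)
      show "Vii (\<chi> k. (1-t) *\<^sub>R (A$k) + t *\<^sub>R (A1$k))" unfolding eq Vii_def
      proof (intro conjI allI impI)
        fix k assume "0 \<le> r k"
        then show "r k < fst ((\<chi> k. A$k + (t * 2 * lam k, 0))$k)" "norm (snd ((\<chi> k. A$k + (t * 2 * lam k, 0))$k)) + r k < 1"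
          using VA nn[of k] unfolding Vii_def by auto
      next
        fix j k assume jk: "j \<noteq> k" "0 \<le> r j" "0 \<le> r k"
        then have d: "r j + r k < dist (A$j) (A$k)" using VA unfolding Vii_def by auto
        have "fst (A$j - A$k) * (t*2*lam j - t*2*lam k) \<ge> 0"
        proof -
          have e2: "fst (A$j - A$k) * (t*2*lam j - t*2*lam k) = (t*2) * ((fst (A$j) - fst (A$k)) * (lam j - lam k))"
            by (simp add: algebra_simps)
          show ?thesis unfolding e2 using t lam2'(1)[OF jk(1)] by (rule_tac mult_nonneg_nonneg) auto
        qed
        then have "norm (A$j - A$k) \<le> norm ((A$j - A$k) + (t*2*lam j - t*2*lam k, 0))" by (rule vert_mono)
        moreover have "(A$j - A$k) + (t*2*lam j - t*2*lam k, 0) = (A$j + (t*2*lam j, 0)) - (A$k + (t*2*lam k, 0))"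
          by (simp add: prod_eq_iff)
        ultimately show "r j + r k < dist ((\<chi> k. A$k + (t * 2 * lam k, 0))$j) ((\<chi> k. A$k + (t * 2 * lam k, 0))$k)"
          using d by (simp add: dist_norm)
      qed
    qed
    have p2: "path_component {x. Vii (x + Cv)} (A1 - Cv) (A2 - Cv)"
    proof (rule shift_pc)
      fix t :: real assume t: "0 \<le> t" "t \<le> 1"
      have eq: "(\<chi> k. (1-t) *\<^sub>R (A1$k) + t *\<^sub>R (A2$k)) = (\<chi> k. (fst (A$k) + 2 * lam k, (1-t) *\<^sub>R snd (A$k)))"
        unfolding A1_def A2_def by (simp add: vec_eq_iff prod_eq_iff algebra_simps)
      show "Vii (\<chi> k. (1-t) *\<^sub>R (A1$k) + t *\<^sub>R (A2$k))" unfolding eq Vii_def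
      proof (intro conjI allI impI)
        fix k assume rk: "0 \<le> r k"
        have "norm ((1-t) *\<^sub>R snd (A$k)) \<le> norm (snd (A$k))" using t
          by (simp add: mult_left_le_one_le)
        moreover have "0 \<le> 2 * lam k" using lam1 by (metis mult_nonneg_nonneg order_trans zero_le_one zero_le_numeral)
        ultimately show "r k < fst ((\<chi> k. (fst (A$k) + 2 * lam k, (1-t) *\<^sub>R snd (A$k)))$k)"
          "norm (snd ((\<chi> k. (fst (A$k) + 2 * lam k, (1-t) *\<^sub>R snd (A$k)))$k)) + r k < 1"
          using VA rk unfolding Vii_def by auto
      next
        fix j k assume jk: "j \<noteq> k" "0 \<le> r j" "0 \<le> r k"
        have "r j + r k < 2" using rhalf[of j] rhalf[of k] jk by linarith
        also have "2 \<le> dist ((\<chi> k. (fst (A$k) + 2 * lam k, (1-t) *\<^sub>R snd (A$k)))$j) ((\<chi> k. (fst (A$k) + 2 * lam k, (1-t) *\<^sub>R snd (A$k)))$k)"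
          using fsep[OF jk(1)] fst_dist_le by (smt (verit) vec_lambda_beta fst_conv)
        finally show "r j + r k < dist ((\<chi> k. (fst (A$k) + 2 * lam k, (1-t) *\<^sub>R snd (A$k)))$j) ((\<chi> k. (fst (A$k) + 2 * lam k, (1-t) *\<^sub>R snd (A$k)))$k)" .
      qed
    qed
    have "vld (1/2) (1/2) R0 P A2"
    proof (rule vld_intro)
      fix k assume "P k"
      then have "r k < fst (A$k)" using VA unfolding Vii_def P_def by auto
      moreover have "2 \<le> 2 * lam k" using lam1 by auto
      ultimately show "1/2 \<le> fst (A2$k) \<and> norm (snd (A2$k)) \<le> 1/2"
        using \<open>P k\<close> unfolding A2_def P_def by auto
    next
      fix j k assume "j \<noteq> k" "P j" "P k"
      then show "2 * R0 < \<bar>fst (A2$j) - fst (A2$k)\<bar> \<or> 2 * R0 < norm (snd (A2$j) - snd (A2$k))"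
        using fsep[of j k] R0(2) unfolding A2_def by auto
    qed
    then have "A2 - Cv \<in> G" unfolding G_def by simp
    moreover have "path_component (config_space D S) x (A2 - Cv)"
      using p1 p2 path_component_trans unfolding cfg A_def by auto
    ultimately show ?thesis by blast
  qed
  show ?thesis
    by (rule pc_combine[OF Gsub _ entry]) (unfold G_def, rule good_pc_x, use R0 in auto)
qed

lemma vld_mono: "vld h0 L R P A \<Longrightarrow> L \<le> L' \<Longrightarrow> vld h0 L' R P A"
  unfolding vld_def by force

lemma good_sub1:
  fixes D :: "(real \<times> 'b::euclidean_space) set" and S :: "'n::finite \<Rightarrow> (real \<times> 'b) set"
  assumes D: "D = {x. fst x > g (snd x)}"
    and P: "\<And>k. \<not> P k \<Longrightarrow> S k = {}"
    and cR: "\<And>k s. s \<in> S k \<Longrightarrow> dist (c k) s \<le> R"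
    and M: "\<And>y. norm y \<le> L + R \<Longrightarrow> g y \<le> M"
    and v: "vld (M + R + 1) L R P (x + (\<chi> k. c k))"
  shows "x \<in> config_space D S"
proof -
  let ?A = "x + (\<chi> k. c k)"
  have Ak: "?A$k = x$k + c k" for k by simp
  have dd: "dist (?A$k) (s + x$k) \<le> R" if "s \<in> S k" for k s
  proof -
    have "dist (?A$k) (s + x$k) = dist (c k) s" unfolding Ak by (simp add: dist_norm algebra_simps)
    then show ?thesis using cR[OF that] by simp
  qed
  have sub: "translate (S k) (x$k) \<subseteq> D" for k
  proof
    fix p assume "p \<in> translate (S k) (x$k)"
    then obtain s where s: "s \<in> S k" "p = s + x$k" unfolding translate_def by auto
    then have Pk: "P k" using P by blast
    have d: "dist (?A$k) p \<le> R" using dd s by simp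
    have "M + R + 1 \<le> fst (?A$k)" "norm (snd (?A$k)) \<le> L" using v Pk unfolding vld_def by auto
    moreover have "\<bar>fst (?A$k) - fst p\<bar> \<le> R" "norm (snd (?A$k) - snd p) \<le> R"
      using fst_dist_le[of "?A$k" p] snd_dist_le[of "?A$k" p] d by linarith+
    moreover have "norm (snd p) \<le> norm (snd (?A$k)) + norm (snd (?A$k) - snd p)"
      by (metis norm_triangle_sub add.commute norm_minus_commute)
    ultimately have "norm (snd p) \<le> L + R" "M + 1 \<le> fst p" by linarith+
    then have "g (snd p) < fst p" using M by fastforce
    then show "p \<in> D" unfolding D by simp
  qed
  have disj: "translate (S j) (x$j) \<inter> translate (S k) (x$k) = {}" if "j \<noteq> k" for j k
  proof (rule ccontr)
    assume "translate (S j) (x$j) \<inter> translate (S k) (x$k) \<noteq> {}"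
    then obtain p where "p \<in> translate (S j) (x$j)" "p \<in> translate (S k) (x$k)" by blast
    then obtain s s' where s: "s \<in> S j" "s' \<in> S k" "s + x$j = s' + x$k" unfolding translate_def by (auto simp del: prod.collapse)
    then have "P j" "P k" using P by blast+
    then have "2*R < dist (?A$j) (?A$k)" using v that unfolding vld_def by auto
    moreover have "dist (?A$j) (?A$k) \<le> dist (?A$j) (s + x$j) + dist (s' + x$k) (?A$k)"
      using s(3) dist_triangle[of "?A$j" "?A$k" "s + x$j"] by (simp add: dist_commute)
    ultimately show False using dd[OF s(1)] dd[OF s(2)] by (simp add: dist_commute)
  qed
  show ?thesis unfolding config_space_def using sub disj by auto
qed

lemma entry1:
  fixes D :: "(real \<times> 'b::euclidean_space) set" and S :: "'n::finite \<Rightarrow> (real \<times> 'b) set"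
  assumes g: "upper_semicontinuous g" and D: "D = {x. fst x > g (snd x)}"
    and conv: "\<And>k. convex (S k)"
    and P: "\<And>k. \<not> P k \<Longrightarrow> S k = {}" and cS: "\<And>k. P k \<Longrightarrow> c k \<in> S k"
    and Bs: "\<And>k s. s \<in> S k \<Longrightarrow> norm s \<le> Bs"
    and R0: "0 \<le> R0" and Bs0: "0 \<le> Bs"
    and x: "x \<in> config_space D S"
  shows "\<exists>Lx. \<forall>h0. \<exists>x'. vld h0 Lx R0 P (x' + (\<chi> k. c k)) \<and> path_component (config_space D S) x x'"
proof -
  have xD: "s + x$k \<in> D" if "s \<in> S k" for s k
    using x that unfolding config_space_def translate_def by blast
  have xdisj: "s + x$j \<noteq> s' + x$k" if "j \<noteq> k" "s \<in> S j" "s' \<in> S k" for s s' j k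
  proof
    assume eq: "s + x$j = s' + x$k"
    have "s + x$j \<in> translate (S j) (x$j)" unfolding translate_def using that by blast
    moreover have "s' + x$k \<in> translate (S k) (x$k)" unfolding translate_def using that by blast
    ultimately have "s + x$j \<in> translate (S j) (x$j) \<inter> translate (S k) (x$k)"
      using eq by simp
    moreover have "translate (S j) (x$j) \<inter> translate (S k) (x$k) = {}" using x that(1) unfolding config_space_def by auto
    ultimately show False by blast
  qed
  define q where "q k = x$k + c k" for k
  have qne: "q j \<noteq> q k" if "j \<noteq> k" "P j" "P k" for j k
    using xdisj[OF that(1) cS[OF that(2)] cS[OF that(3)]] unfolding q_def by (simp add: add.commute)
  define f where "f jk = (if fst jk \<noteq> snd jk \<and> P (fst jk) \<and> P (snd jk) then 1 / dist (q (fst jk)) (q (snd jk)) else 0)" for jk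
  define Tsp where "Tsp = (2*R0+1) * (\<Sum>jk\<in>UNIV. f jk)"
  have f0: "0 \<le> f jk" for jk unfolding f_def by auto
  have T0: "0 \<le> Tsp" unfolding Tsp_def using R0 f0 by (intro mult_nonneg_nonneg sum_nonneg) auto
  have qsep: "2*R0 < (1 + Tsp) * dist (q j) (q k)" if "j \<noteq> k" "P j" "P k" for j k
  proof -
    have dpos: "0 < dist (q j) (q k)" using qne[OF that] by simp
    have "f (j,k) \<le> (\<Sum>jk\<in>UNIV. f jk)" by (rule member_le_sum) (use f0 in auto)
    then have "1 / dist (q j) (q k) \<le> (\<Sum>jk\<in>UNIV. f jk)" using that unfolding f_def by simp
    then have "(2*R0+1) * (1 / dist (q j) (q k)) \<le> Tsp" unfolding Tsp_def using R0 by (intro mult_left_mono) auto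
    then have "(2*R0+1) * (1 / dist (q j) (q k)) * dist (q j) (q k) \<le> Tsp * dist (q j) (q k)"
      using dpos by (intro mult_right_mono) auto
    then have "2*R0+1 \<le> Tsp * dist (q j) (q k)" using dpos by simp
    then have "2*R0 < dist (q j) (q k) + Tsp * dist (q j) (q k)" using dpos by linarith
    then show ?thesis by (simp add: distrib_right)
  qed
  define p1 where "p1 = - (\<Sum>k\<in>UNIV. \<bar>fst (q k)\<bar>)"
  have p1le: "p1 \<le> fst (q k)" for k
  proof -
    have "\<bar>fst (q k)\<bar> \<le> (\<Sum>k\<in>UNIV. \<bar>fst (q k)\<bar>)" by (rule member_le_sum) auto
    then show ?thesis unfolding p1_def by linarith
  qed
  define w where "w k = q k - (p1, 0)" for k
  define Xn where "Xn = (\<Sum>k\<in>UNIV. norm (x$k))"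
  define Sq where "Sq = (\<Sum>k\<in>UNIV. norm (snd (q k)))"
  have Xn: "norm (x$k) \<le> Xn" for k unfolding Xn_def by (rule member_le_sum) auto
  have Sq: "norm (snd (q k)) \<le> Sq" for k unfolding Sq_def by (rule member_le_sum) auto
  have Sq0: "0 \<le> Sq" unfolding Sq_def by (auto intro: sum_nonneg)
  define L1 where "L1 = Bs + Xn + Tsp * Sq"
  obtain M1 where M1: "\<And>y. y \<in> cball 0 L1 \<Longrightarrow> g y \<le> M1"
    using usc_bounded[OF g compact_cball[of 0 L1]] by blast
  define Lx where "Lx = (1 + Tsp) * Sq"
  show ?thesis
  proof (intro exI allI)
    fix h0 :: real
    define H where "H = \<bar>M1\<bar> + Bs + Xn + \<bar>h0\<bar> + (\<Sum>k\<in>UNIV. \<bar>fst (q k)\<bar>) + 1"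
    define x1 where "x1 = (\<chi> k. x$k + (H, 0))"
    define x2 where "x2 = (\<chi> k. x$k + (H, 0) + Tsp *\<^sub>R w k)"
    have p1: "path_component (config_space D S) x x1"
    proof (rule seg_pc_vec)
      fix t :: real assume t: "0 \<le> t" "t \<le> 1"
      have "0 \<le> Xn" "0 \<le> (\<Sum>k\<in>UNIV. \<bar>fst (q k)\<bar>)" unfolding Xn_def by (auto intro: sum_nonneg)
      then have Hn: "0 \<le> H" unfolding H_def using Bs0 by linarith
      have eq: "(\<chi> k. (1-t) *\<^sub>R (x$k) + t *\<^sub>R (x1$k)) = (\<chi> k. x$k + (t*H, 0))"
        unfolding x1_def by (simp add: vec_eq_iff prod_eq_iff algebra_simps)
      have "(\<chi> k. x$k + (t*H, 0)) \<in> config_space D S"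
        unfolding config_space_def
      proof (intro CollectI conjI allI impI)
        fix k
        show "translate (S k) ((\<chi> k. x$k + (t*H, 0))$k) \<subseteq> D"
        proof
          fix p assume "p \<in> translate (S k) ((\<chi> k. x$k + (t*H, 0))$k)"
          then obtain s where s: "s \<in> S k" "p = s + x$k + (t*H, 0)" unfolding translate_def by (auto simp: add.assoc)
          have "g (snd (s + x$k)) < fst (s + x$k)" using xD[OF s(1)] D by simp
          moreover have "0 \<le> t*H" using t Hn by simp
          ultimately show "p \<in> D" unfolding D s(2) by simp
        qed
      next
        fix j k :: 'n assume jk: "j \<noteq> k"
        show "translate (S j) ((\<chi> k. x$k + (t*H, 0))$j) \<inter> translate (S k) ((\<chi> k. x$k + (t*H, 0))$k) = {}"
        proof (rule ccontr)
          assume "translate (S j) ((\<chi> k. x$k + (t*H, 0))$j) \<inter> translate (S k) ((\<chi> k. x$k + (t*H, 0))$k) \<noteq> {}"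
          then obtain p where "p \<in> translate (S j) ((\<chi> k. x$k + (t*H, 0))$j)" "p \<in> translate (S k) ((\<chi> k. x$k + (t*H, 0))$k)" by blast
          then obtain s s' where s: "s \<in> S j" "s' \<in> S k" "s + (x$j + (t*H, 0)) = s' + (x$k + (t*H, 0))"
            unfolding translate_def by (auto simp del: prod.collapse)
          then have "s + x$j = s' + x$k" by (metis add.assoc add_right_cancel)
          then show False using xdisj[OF jk s(1,2)] by simp
        qed
      qed
      then show "(\<chi> k. (1-t) *\<^sub>R (x$k) + t *\<^sub>R (x1$k)) \<in> config_space D S" unfolding eq .
    qed
    have sa0: "0 \<le> (\<Sum>k\<in>UNIV. \<bar>fst (q k)\<bar>)" by (auto intro: sum_nonneg)
    have Hbig: "M1 + Bs + Xn < H" "h0 + (\<Sum>k\<in>UNIV. \<bar>fst (q k)\<bar>) \<le> H" unfolding H_def using sa0 Bs0 Xn[of undefined] norm_ge_zero[of "x$undefined"] by linarith+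
    have p2: "path_component (config_space D S) x1 x2"
    proof (rule seg_pc_vec)
      fix t :: real assume t: "0 \<le> t" "t \<le> 1"
      define \<tau> where "\<tau> = t * Tsp"
      have tau: "0 \<le> \<tau>" "\<tau> \<le> Tsp" unfolding \<tau>_def using t T0 by (auto simp: mult_left_le_one_le)
      have eq: "(\<chi> k. (1-t) *\<^sub>R (x1$k) + t *\<^sub>R (x2$k)) = (\<chi> k. x$k + (H, 0) + \<tau> *\<^sub>R w k)"
        unfolding x1_def x2_def \<tau>_def by (simp add: vec_eq_iff algebra_simps)
      have "(\<chi> k. x$k + (H, 0) + \<tau> *\<^sub>R w k) \<in> config_space D S"
        unfolding config_space_def
      proof (intro CollectI conjI allI impI)
        fix k
        show "translate (S k) ((\<chi> k. x$k + (H, 0) + \<tau> *\<^sub>R w k)$k) \<subseteq> D"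
        proof
          fix p assume "p \<in> translate (S k) ((\<chi> k. x$k + (H, 0) + \<tau> *\<^sub>R w k)$k)"
          then obtain s where s: "s \<in> S k" "p = s + (x$k + (H, 0) + \<tau> *\<^sub>R w k)"
            unfolding translate_def by auto
          have sp: "snd p = snd s + snd (x$k) + \<tau> *\<^sub>R snd (q k)" "fst p = fst s + fst (x$k) + H + \<tau> * (fst (q k) - p1)"
            unfolding s(2) w_def by auto
          have "norm (snd p) \<le> norm (snd s) + norm (snd (x$k)) + \<tau> * norm (snd (q k))"
            unfolding sp using tau by (metis norm_triangle_le norm_triangle_ineq add_mono order_refl norm_scaleR abs_of_nonneg)
          moreover have "norm (snd s) \<le> Bs" using Bs[OF s(1)] norm_snd_le[of "snd s" "fst s"] by simp
          moreover have "norm (snd (x$k)) \<le> Xn" using Xn[of k] norm_snd_le[of "snd (x$k)" "fst (x$k)"] by simp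
          moreover have "\<tau> * norm (snd (q k)) \<le> Tsp * Sq" using tau Sq[of k] T0 by (intro mult_mono) auto
          ultimately have "norm (snd p) \<le> L1" unfolding L1_def by linarith
          then have gM: "g (snd p) \<le> M1" using M1 by simp
          have "\<bar>fst s\<bar> \<le> Bs" using Bs[OF s(1)] norm_fst_le[of "fst s" "snd s"] by simp
          moreover have "\<bar>fst (x$k)\<bar> \<le> Xn" using Xn[of k] norm_fst_le[of "fst (x$k)" "snd (x$k)"] by simp
          moreover have "0 \<le> \<tau> * (fst (q k) - p1)" using tau p1le[of k] by simp
          ultimately have "M1 < fst p" unfolding sp using Hbig by linarith
          then show "p \<in> D" unfolding D using gM by simp
        qed
      next
        fix j k :: 'n assume jk: "j \<noteq> k"
        show "translate (S j) ((\<chi> k. x$k + (H, 0) + \<tau> *\<^sub>R w k)$j) \<inter> translate (S k) ((\<chi> k. x$k + (H, 0) + \<tau> *\<^sub>R w k)$k) = {}"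
        proof (rule ccontr)
          assume "translate (S j) ((\<chi> k. x$k + (H, 0) + \<tau> *\<^sub>R w k)$j) \<inter> translate (S k) ((\<chi> k. x$k + (H, 0) + \<tau> *\<^sub>R w k)$k) \<noteq> {}"
          then obtain p where "p \<in> translate (S j) ((\<chi> k. x$k + (H, 0) + \<tau> *\<^sub>R w k)$j)" "p \<in> translate (S k) ((\<chi> k. x$k + (H, 0) + \<tau> *\<^sub>R w k)$k)" by blast
          then obtain s s' where s: "s \<in> S j" "s' \<in> S k" "s + (x$j + (H, 0) + \<tau> *\<^sub>R w j) = s' + (x$k + (H, 0) + \<tau> *\<^sub>R w k)"
            unfolding translate_def by (auto simp del: prod.collapse)
          have Pj: "P j" "P k" using P s(1,2) by blast+
          define u where "u = 1 / (1 + \<tau>)"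
          define v where "v = \<tau> / (1 + \<tau>)"
          have uv: "0 \<le> u" "0 \<le> v" "u + v = 1" "(1+\<tau>) * u = 1" "(1+\<tau>) * v = \<tau>"
            unfolding u_def v_def using tau by (auto simp: field_simps)
          define zj where "zj = u *\<^sub>R s + v *\<^sub>R c j"
          define zk where "zk = u *\<^sub>R s' + v *\<^sub>R c k"
          have zin: "zj \<in> S j" "zk \<in> S k" unfolding zj_def zk_def
            using convexD[OF conv s(1) cS[OF Pj(1)] uv(1-3)] convexD[OF conv s(2) cS[OF Pj(2)] uv(1-3)] by auto
          have ez: "(1+\<tau>) *\<^sub>R (zj + x$j) = s + x$j + \<tau> *\<^sub>R q j" "(1+\<tau>) *\<^sub>R (zk + x$k) = s' + x$k + \<tau> *\<^sub>R q k"
            unfolding zj_def zk_def q_def using uv by (simp_all add: scaleR_add_right scaleR_scaleR algebra_simps)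
          have "s + x$j + \<tau> *\<^sub>R q j = s' + x$k + \<tau> *\<^sub>R q k"
          proof -
            have "s + x$j + \<tau> *\<^sub>R q j = (s + (x$j + (H, 0) + \<tau> *\<^sub>R w j)) - (H, 0) + \<tau> *\<^sub>R (p1, 0)"
              unfolding w_def by (simp add: algebra_simps)
            also have "\<dots> = (s' + (x$k + (H, 0) + \<tau> *\<^sub>R w k)) - (H, 0) + \<tau> *\<^sub>R (p1, 0)" using s(3) by simp
            also have "\<dots> = s' + x$k + \<tau> *\<^sub>R q k" unfolding w_def by (simp add: algebra_simps)
            finally show ?thesis .
          qed
          then have "(1+\<tau>) *\<^sub>R (zj + x$j) = (1+\<tau>) *\<^sub>R (zk + x$k)" using ez by simp
          then have "zj + x$j = zk + x$k" using tau by simp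
          then show False using xdisj[OF jk zin] by simp
        qed
      qed
      then show "(\<chi> k. (1-t) *\<^sub>R (x1$k) + t *\<^sub>R (x2$k)) \<in> config_space D S" unfolding eq .
    qed
    have A2: "(x2 + (\<chi> k. c k))$k = q k + (H, 0) + Tsp *\<^sub>R w k" for k
      unfolding x2_def q_def by (simp add: algebra_simps)
    have "vld h0 Lx R0 P (x2 + (\<chi> k. c k))"
      unfolding vld_def A2
    proof (intro conjI allI impI)
      fix k assume "P k"
      have "fst (q k) + H \<le> fst (q k + (H, 0) + Tsp *\<^sub>R w k)"
        using T0 p1le[of k] unfolding w_def by simp
      moreover have "h0 \<le> fst (q k) + H" using p1le[of k] Hbig(2) unfolding p1_def by linarith
      ultimately show "h0 \<le> fst (q k + (H, 0) + Tsp *\<^sub>R w k)" by linarith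
      have "snd (q k + (H, 0) + Tsp *\<^sub>R w k) = (1 + Tsp) *\<^sub>R snd (q k)"
        unfolding w_def by (simp add: algebra_simps)
      then show "norm (snd (q k + (H, 0) + Tsp *\<^sub>R w k)) \<le> Lx"
        unfolding Lx_def using T0 Sq[of k] by (simp add: mult_left_mono)
    next
      fix j k assume jk: "j \<noteq> k" "P j" "P k"
      have "(q j + (H, 0) + Tsp *\<^sub>R w j) - (q k + (H, 0) + Tsp *\<^sub>R w k) = (1 + Tsp) *\<^sub>R (q j - q k)"
        unfolding w_def by (simp add: algebra_simps)
      then have "dist (q j + (H, 0) + Tsp *\<^sub>R w j) (q k + (H, 0) + Tsp *\<^sub>R w k) = (1 + Tsp) * dist (q j) (q k)"
        using T0 by (simp add: dist_norm)
      then show "2 * R0 < dist (q j + (H, 0) + Tsp *\<^sub>R w j) (q k + (H, 0) + Tsp *\<^sub>R w k)"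
        using qsep[OF jk] by simp
    qed
    then show "vld h0 Lx R0 P (x2 + (\<chi> k. c k)) \<and> path_component (config_space D S) x x2"
      using p1 p2 path_component_trans by blast
  qed
qed

lemma case1:
  fixes D :: "(real \<times> 'b::euclidean_space) set" and S :: "'n::finite \<Rightarrow> (real \<times> 'b) set"
  assumes g: "upper_semicontinuous g" and D: "D = {x. fst x > g (snd x)}"
    and conv: "\<And>k. convex (S k)" and bnd: "\<And>k. bounded (S k)"
  shows "path_connected (config_space D S)"
proof -
  define P where "P k = (S k \<noteq> {})" for k
  define c where "c k = (SOME s. s \<in> S k)" for k
  have cS: "c k \<in> S k" if "P k" for k using that unfolding P_def c_def by (metis ex_in_conv someI_ex)
  have P: "S k = {}" if "\<not> P k" for k using that unfolding P_def by auto
  define R0 where "R0 = Max (range (\<lambda>k. diameter (S k)))"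
  have dR: "diameter (S k) \<le> R0" for k unfolding R0_def by (rule Max_ge) auto
  have R0: "0 \<le> R0" using diameter_ge_0[OF bnd[of undefined]] dR[of undefined] by linarith
  have cR: "dist (c k) s \<le> R0" if "s \<in> S k" for k s
  proof -
    have "P k" using that unfolding P_def by auto
    then show ?thesis using diameter_bounded_bound[OF bnd cS[OF \<open>P k\<close>] that] dR[of k] by linarith
  qed
  have "bounded (\<Union>k. S k)" using bnd by (intro bounded_UN) auto
  then obtain B where B: "\<And>s. s \<in> (\<Union>k. S k) \<Longrightarrow> norm s \<le> B" unfolding bounded_iff by blast
  define Bs where "Bs = max B 0"
  have Bs: "norm s \<le> Bs" if "s \<in> S k" for s k
  proof -
    have "norm s \<le> B" using B[of s] that by blast
    then show ?thesis unfolding Bs_def by linarith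
  qed
  have Bs0: "0 \<le> Bs" unfolding Bs_def by simp
  show ?thesis unfolding path_connected_component
  proof (intro ballI)
    fix x y assume x: "x \<in> config_space D S" and y: "y \<in> config_space D S"
    from entry1[OF g D conv P cS Bs R0 Bs0 x] obtain Lx where
      Lx: "\<forall>h0. \<exists>x'. vld h0 Lx R0 P (x' + (\<chi> k. c k)) \<and> path_component (config_space D S) x x'" ..
    from entry1[OF g D conv P cS Bs R0 Bs0 y] obtain Ly where
      Ly: "\<forall>h0. \<exists>x'. vld h0 Ly R0 P (x' + (\<chi> k. c k)) \<and> path_component (config_space D S) y x'" ..
    define L where "L = \<bar>Lx\<bar> + \<bar>Ly\<bar> + R0 + 1"
    obtain M where M: "\<And>z. z \<in> cball 0 (L + R0) \<Longrightarrow> g z \<le> M"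
      using usc_bounded[OF g compact_cball[of 0 "L + R0"]] by blast
    have M': "g z \<le> M" if "norm z \<le> L + R0" for z using M that by simp
    from spec[OF Lx, of "M + R0 + 1"] obtain x' where x': "vld (M + R0 + 1) Lx R0 P (x' + (\<chi> k. c k))" "path_component (config_space D S) x x'"
      by (elim exE conjE)
    from spec[OF Ly, of "M + R0 + 1"] obtain y' where y': "vld (M + R0 + 1) Ly R0 P (y' + (\<chi> k. c k))" "path_component (config_space D S) y y'"
      by (elim exE conjE)
    define G where "G = {z. vld (M + R0 + 1) L R0 P (z + (\<chi> k. c k))}"
    have "Lx \<le> L" "Ly \<le> L" unfolding L_def using R0 by linarith+
    then have xG: "x' \<in> G" "y' \<in> G" unfolding G_def using vld_mono[OF x'(1)] vld_mono[OF y'(1)] by auto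
    have Gsub: "G \<subseteq> config_space D S"
    proof
      fix z assume "z \<in> G"
      then show "z \<in> config_space D S" unfolding G_def by (intro good_sub1[OF D P cR M']) auto
    qed
    have "path_connected G" unfolding G_def by (rule good_pc_x) (use R0 in \<open>auto simp: L_def\<close>)
    then have "path_component G x' y'" using xG unfolding path_connected_component by blast
    then have "path_component (config_space D S) x' y'"
      by (rule path_component_of_subset[OF Gsub])
    then have "path_component (config_space D S) x y'" by (rule path_component_trans[OF x'(2)])
    then show "path_component (config_space D S) x y"
      by (rule path_component_trans) (rule path_component_sym[OF y'(2)])
  qed
qed

theorem lemma3p2:
  fixes D :: "(real \<times> 'b::euclidean_space) set"
    and S :: "'n::finite \<Rightarrow> (real \<times> 'b) set"
  assumes "open D" and "connected D"
    and "\<And>k. closed (S k)" and "\<And>k. bounded (S k)"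
    and "(\<exists>g :: 'b \<Rightarrow> real. upper_semicontinuous g \<and>
              D = {x. fst x > g (snd x)} \<and> (\<forall>k. convex (S k)))
         \<or> (D = {x. fst x > 0 \<and> (norm (snd x))\<^sup>2 < 1} \<and>
              (\<forall>k. (\<exists>c r. S k = cball c r) \<and> diameter (S k) < 1))"
  shows "path_connected (config_space D S)"
  using assms(5)
proof (elim disjE exE conjE)
  fix g :: "'b \<Rightarrow> real"
  assume "upper_semicontinuous g" "D = {x. fst x > g (snd x)}" "\<forall>k. convex (S k)"
  then show ?thesis using case1[of g D S] assms(4) by blast
next
  assume "D = {x. fst x > 0 \<and> (norm (snd x))\<^sup>2 < 1}" "\<forall>k. (\<exists>c r. S k = cball c r) \<and> diameter (S k) < 1"
  then show ?thesis by (rule case2)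
qed

end
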